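(* The subgroup $\mathrm{B}_2(\mathbb{C}[z])$ of upper triangular matrices of $\mathrm{GL}_2(\mathbb{C}[z])$ is a maximal solvable subgroup: every subgroup of $\mathrm{GL}_2(\mathbb{C}[z])$ strictly containing it is not solvable.
   Context: $\mathrm{GL}_2(\mathbb{C}[z])$ is the group of $2\times2$ matrices over the polynomial ring $\mathbb{C}[z]$ that are invertible over $\mathbb{C}[z]$ (determinant in $\mathbb{C}^*$). *)

theory Defs
  imports "Jordan_Normal_Form.Determinant" "HOL-Algebra.Solvable_Groups"
          "HOL-Computational_Algebra.Polynomial"
begin

definition GL2_Cz :: "complex poly mat monoid" where
  "GL2_Cz = \<lparr> carrier = {A \<in> carrier_mat 2 2. is_unit (det A)},
             mult = (\<lambda>A B. A * B),
             one = 1\<^sub>m 2 \<rparr>"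

definition B2_Cz :: "complex poly mat set" where
  "B2_Cz = {A \<in> carrier GL2_Cz. upper_triangular A}"

end

theory Submission
  imports Defs
begin

definition mat2 :: "'a::zero \<Rightarrow> 'a \<Rightarrow> 'a \<Rightarrow> 'a \<Rightarrow> 'a mat" where
  "mat2 a b c d = mat 2 2 (\<lambda>(i,j). if i = 0 then (if j = 0 then a else b) else (if j = 0 then c else d))"

lemma mat2_carrier[simp]: "mat2 a b c d \<in> carrier_mat 2 2"
  by (simp add: mat2_def)

lemma mat2_idx[simp]: "mat2 a b c d $$ (0,0) = a" "mat2 a b c d $$ (0,1) = b"
  "mat2 a b c d $$ (1,0) = c" "mat2 a b c d $$ (1,1) = d"
  by (simp_all add: mat2_def)

lemma mat2_idx'[simp]: "mat2 a b c d $$ (0,Suc 0) = b"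
  "mat2 a b c d $$ (Suc 0,0) = c" "mat2 a b c d $$ (Suc 0,Suc 0) = d"
  by (simp_all add: mat2_def)

lemma lt2: "(i::nat) < 2 \<longleftrightarrow> i = 0 \<or> i = 1" by auto

lemma mat2_eta: "A \<in> carrier_mat 2 2 \<Longrightarrow> A = mat2 (A$$(0,0)) (A$$(0,1)) (A$$(1,0)) (A$$(1,1))"
  by (rule eq_matI) (auto simp: mat2_def lt2)

lemma mat2_eq[simp]: "mat2 a b c d = mat2 a' b' c' d' \<longleftrightarrow> a = a' \<and> b = b' \<and> c = c' \<and> d = d'"
  by (metis mat2_idx)

lemma mat2_mult[simp]: "mat2 (a::'a::comm_ring_1) b c d * mat2 e f g h = mat2 (a*e+b*g) (a*f+b*h) (c*e+d*g) (c*f+d*h)"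
  by (rule eq_matI) (auto simp: mat2_def scalar_prod_def lt2 numeral_2_eq_2)

lemma one_mat2: "(1\<^sub>m 2 :: 'a::comm_ring_1 mat) = mat2 1 0 0 1"
  by (rule eq_matI) (auto simp: mat2_def lt2)

lemma det_mat2[simp]: "det (mat2 (a::'a::comm_ring_1) b c d) = a*d - b*c"
proof -
  have 1: "det (mat_delete (mat2 a b c d) 0 0) = d"
    by (subst det_single) (auto simp: mat_delete_def mat2_def)
  have 2: "det (mat_delete (mat2 a b c d) 1 0) = b"
    by (subst det_single) (auto simp: mat_delete_def mat2_def)
  show ?thesis
    apply (subst laplace_expansion_column[where j=0 and n=2])
    using 1 2 mat2_carrier[of a b c d] mat2_idx(3)[of a b c d] by (auto simp: cofactor_def numeral_2_eq_2)
qed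

lemma GL_simps[simp]: "carrier GL2_Cz = {A \<in> carrier_mat 2 2. is_unit (det A)}"
  "mult GL2_Cz = (\<lambda>A B. A * B)" "one GL2_Cz = 1\<^sub>m 2"
  by (simp_all add: GL2_Cz_def)

lemma unit_inv_ex: "is_unit (k::complex poly) \<Longrightarrow> \<exists>k'. k * k' = 1"
  by (metis dvd_def)

lemma ring_aux1: "(k::'a::comm_ring_1) * d * (k * a) - (- (k * b)) * (- (k * c)) = k * ((a*d - b*c) * k)"
  by (simp add: algebra_simps)

lemma ring_aux2: "(a*d - b*c) * (k::'a::comm_ring_1) = 1 \<Longrightarrow>
   mat2 (k*d) (-(k*b)) (-(k*c)) (k*a) * mat2 a b c d = mat2 1 0 0 1"
  by (simp add: algebra_simps)

lemma GL_left_inv: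
  assumes "A \<in> carrier GL2_Cz"
  shows "\<exists>k. det A * k = 1 \<and> mat2 (k*A$$(1,1)) (-(k*A$$(0,1))) (-(k*A$$(1,0))) (k*A$$(0,0)) \<in> carrier GL2_Cz
      \<and> mat2 (k*A$$(1,1)) (-(k*A$$(0,1))) (-(k*A$$(1,0))) (k*A$$(0,0)) * A = 1\<^sub>m 2"
proof -
  have A: "A \<in> carrier_mat 2 2" "is_unit (det A)" using assms by auto
  obtain k where k: "det A * k = 1" using unit_inv_ex A(2) by blast
  define a b c d where "a = A$$(0,0)" "b = A$$(0,1)" "c = A$$(1,0)" "d = A$$(1,1)"
  have Ae: "A = mat2 a b c d" using mat2_eta[OF A(1)] a_b_c_d_def by simp
  have k': "(a*d - b*c) * k = 1" using k Ae by simp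
  have "det (mat2 (k*d) (-(k*b)) (-(k*c)) (k*a)) = k * ((a*d - b*c) * k)"
    unfolding det_mat2 by (rule ring_aux1)
  moreover have "is_unit k" using k' dvd_triv_right by metis
  ultimately have "is_unit (det (mat2 (k*d) (-(k*b)) (-(k*c)) (k*a)))" using k' by simp
  hence C: "mat2 (k*d) (-(k*b)) (-(k*c)) (k*a) \<in> carrier GL2_Cz"
    by (simp only: GL_simps mem_Collect_eq mat2_carrier simp_thms)
  moreover have "mat2 (k*d) (-(k*b)) (-(k*c)) (k*a) * A = 1\<^sub>m 2"
    unfolding one_mat2 Ae using k' by (rule ring_aux2)
  ultimately show ?thesis using k unfolding a_b_c_d_def by blast
qed

lemma group_GL: "group GL2_Cz"
proof (rule groupI)
  fix x y assume "x \<in> carrier GL2_Cz" "y \<in> carrier GL2_Cz"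
  thus "x \<otimes>\<^bsub>GL2_Cz\<^esub> y \<in> carrier GL2_Cz"
    by (auto simp: det_mult is_unit_mult_iff)
next
  show "\<one>\<^bsub>GL2_Cz\<^esub> \<in> carrier GL2_Cz" by simp
next
  fix x y z assume "x \<in> carrier GL2_Cz" "y \<in> carrier GL2_Cz" "z \<in> carrier GL2_Cz"
  thus "x \<otimes>\<^bsub>GL2_Cz\<^esub> y \<otimes>\<^bsub>GL2_Cz\<^esub> z = x \<otimes>\<^bsub>GL2_Cz\<^esub> (y \<otimes>\<^bsub>GL2_Cz\<^esub> z)"
    by (auto intro: assoc_mult_mat)
next
  fix x assume "x \<in> carrier GL2_Cz"
  thus "\<one>\<^bsub>GL2_Cz\<^esub> \<otimes>\<^bsub>GL2_Cz\<^esub> x = x" by auto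
next
  fix x assume "x \<in> carrier GL2_Cz"
  thus "\<exists>y\<in>carrier GL2_Cz. y \<otimes>\<^bsub>GL2_Cz\<^esub> x = \<one>\<^bsub>GL2_Cz\<^esub>"
  proof -
    from GL_left_inv[OF \<open>x \<in> carrier GL2_Cz\<close>] obtain k where
      "mat2 (k*x$$(1,1)) (-(k*x$$(0,1))) (-(k*x$$(1,0))) (k*x$$(0,0)) \<in> carrier GL2_Cz"
      "mat2 (k*x$$(1,1)) (-(k*x$$(0,1))) (-(k*x$$(1,0))) (k*x$$(0,0)) * x = 1\<^sub>m 2" by blast
    thus ?thesis by (metis GL_simps(2,3))
  qed
qed

interpretation GL: group GL2_Cz by (rule group_GL)

lemma GL_inv:
  assumes "A \<in> carrier GL2_Cz"
  shows "\<exists>k. det A * k = 1 \<and> inv\<^bsub>GL2_Cz\<^esub> A = mat2 (k*A$$(1,1)) (-(k*A$$(0,1))) (-(k*A$$(1,0))) (k*A$$(0,0))"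
proof -
  obtain k where "det A * k = 1" and "mat2 (k*A$$(1,1)) (-(k*A$$(0,1))) (-(k*A$$(1,0))) (k*A$$(0,0)) \<in> carrier GL2_Cz"
      and "mat2 (k*A$$(1,1)) (-(k*A$$(0,1))) (-(k*A$$(1,0))) (k*A$$(0,0)) * A = 1\<^sub>m 2"
    using GL_left_inv[OF assms] by blast
  moreover have "inv\<^bsub>GL2_Cz\<^esub> A = mat2 (k*A$$(1,1)) (-(k*A$$(0,1))) (-(k*A$$(1,0))) (k*A$$(0,0))"
    using group.inv_equality[OF group_GL] assms calculation by (metis GL_simps(2,3))
  ultimately show ?thesis by blast
qed


lemma mult_eta:
  assumes A: "A \<in> carrier_mat 2 2" and B: "(B::'a::comm_ring_1 mat) \<in> carrier_mat 2 2"
  shows "A * B = mat2 (A$$(0,0)*B$$(0,0) + A$$(0,1)*B$$(1,0)) (A$$(0,0)*B$$(0,1) + A$$(0,1)*B$$(1,1))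
                      (A$$(1,0)*B$$(0,0) + A$$(1,1)*B$$(1,0)) (A$$(1,0)*B$$(0,1) + A$$(1,1)*B$$(1,1))"
proof -
  have "A * B = mat2 (A$$(0,0)) (A$$(0,1)) (A$$(1,0)) (A$$(1,1)) * mat2 (B$$(0,0)) (B$$(0,1)) (B$$(1,0)) (B$$(1,1))"
    using mat2_eta[OF A] mat2_eta[OF B] by (rule arg_cong2[where f=times])
  thus ?thesis by (simp only: mat2_mult)
qed

lemma B2_iff: "A \<in> B2_Cz \<longleftrightarrow> A \<in> carrier GL2_Cz \<and> A$$(1,0) = 0"
  unfolding B2_Cz_def upper_triangular_def by (auto simp: lt2 less_Suc_eq)

lemma subgroup_B2: "subgroup B2_Cz GL2_Cz"
proof (rule group.subgroupI[OF group_GL])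
  show "B2_Cz \<subseteq> carrier GL2_Cz" by (auto simp: B2_iff)
  have "1\<^sub>m 2 \<in> B2_Cz" unfolding B2_iff by simp
  thus "B2_Cz \<noteq> {}" by blast
next
  fix a assume a: "a \<in> B2_Cz"
  hence "a \<in> carrier GL2_Cz" by (simp only: B2_iff)
  then obtain k where "inv\<^bsub>GL2_Cz\<^esub> a = mat2 (k*a$$(1,1)) (-(k*a$$(0,1))) (-(k*a$$(1,0))) (k*a$$(0,0))"
    using GL_inv by blast
  moreover have "inv\<^bsub>GL2_Cz\<^esub> a \<in> carrier GL2_Cz"
    using a group.inv_closed[OF group_GL] by (auto simp: B2_iff)
  ultimately show "inv\<^bsub>GL2_Cz\<^esub> a \<in> B2_Cz" using a by (simp add: B2_iff)
next
  fix a b assume ab: "a \<in> B2_Cz" "b \<in> B2_Cz"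
  hence "a \<otimes>\<^bsub>GL2_Cz\<^esub> b \<in> carrier GL2_Cz" 
    using GL.m_closed by (auto simp: B2_iff)
  moreover have "(a * b) $$ (1,0) = 0"
    using ab by (subst mult_eta) (auto simp: B2_iff)
  ultimately show "a \<otimes>\<^bsub>GL2_Cz\<^esub> b \<in> B2_Cz" by (simp add: B2_iff)
qed



definition U2 :: "complex poly mat set" where
  "U2 = {A \<in> B2_Cz. A$$(0,0) = 1 \<and> A$$(1,1) = 1}"

lemma B2_eta: assumes "a \<in> B2_Cz" shows "a = mat2 (a$$(0,0)) (a$$(0,1)) 0 (a$$(1,1))"
proof -
  have c: "a \<in> carrier_mat 2 2" "a$$(1,0) = 0" using assms by (auto simp: B2_iff)
  have "mat2 (a$$(0,0)) (a$$(0,1)) (a$$(1,0)) (a$$(1,1)) = mat2 (a$$(0,0)) (a$$(0,1)) 0 (a$$(1,1))"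
    using c(2) by simp
  with mat2_eta[OF c(1)] show ?thesis by (rule trans)
qed

lemma U2_eta: assumes "a \<in> U2" shows "a = mat2 1 (a$$(0,1)) 0 1"
proof -
  have "a \<in> B2_Cz" "a$$(0,0) = 1" "a$$(1,1) = 1" using assms by (auto simp: U2_def)
  have "mat2 (a$$(0,0)) (a$$(0,1)) 0 (a$$(1,1)) = mat2 1 (a$$(0,1)) 0 1"
    using \<open>a$$(0,0) = 1\<close> \<open>a$$(1,1) = 1\<close> by simp
  with B2_eta[OF \<open>a \<in> B2_Cz\<close>] show ?thesis by (rule trans)
qed

lemma B2_inv_eq:
  assumes "a \<in> B2_Cz"
  shows "\<exists>k. k * (a$$(0,0) * a$$(1,1)) = 1 \<and>
     inv\<^bsub>GL2_Cz\<^esub> a = mat2 (k*a$$(1,1)) (-(k*a$$(0,1))) 0 (k*a$$(0,0))"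
proof -
  have a: "a \<in> carrier GL2_Cz" "a$$(1,0) = 0" using assms by (simp_all only: B2_iff)
  then obtain k where k: "det a * k = 1" "inv\<^bsub>GL2_Cz\<^esub> a = mat2 (k*a$$(1,1)) (-(k*a$$(0,1))) (-(k*a$$(1,0))) (k*a$$(0,0))"
    using GL_inv by blast
  have "det a = det (mat2 (a$$(0,0)) (a$$(0,1)) 0 (a$$(1,1)))"
    using B2_eta[OF assms] by (rule arg_cong)
  hence "det a = a$$(0,0) * a$$(1,1)" by simp
  thus ?thesis using k a by (auto simp: mult.commute)
qed

lemma comm_diag:
  fixes a :: "'a::comm_ring_1"
  assumes "k*(a*d) = 1" "k'*(e*h) = 1"
   "M = mat2 a b 0 d * mat2 e f 0 h * mat2 (k*d) (-(k*b)) 0 (k*a) * mat2 (k'*h) (-(k'*f)) 0 (k'*e)"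
  shows "M$$(0,0) = 1 \<and> M$$(1,1) = 1"
proof -
  have e1: "M$$(0,0) = (k*(a*d))*(k'*(e*h))" "M$$(1,1) = (k*(a*d))*(k'*(e*h))"
    using assms(3) by (simp_all add: algebra_simps)
  thus ?thesis using assms(1,2) by simp
qed

lemma solvable_B2: "solvable (GL2_Cz\<lparr>carrier := B2_Cz\<rparr>)"
proof -
  let ?G = "GL2_Cz\<lparr>carrier := B2_Cz\<rparr>"
  interpret G1: group ?G by (rule GL.subgroup_imp_group[OF subgroup_B2])
  have invc: "\<And>x. x \<in> B2_Cz \<Longrightarrow> inv\<^bsub>?G\<^esub> x = inv\<^bsub>GL2_Cz\<^esub> x"
    using GL.m_inv_consistent[OF subgroup_B2] by blast
  have U2sub: "subgroup U2 ?G"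
  proof (rule G1.subgroupI)
    show "U2 \<subseteq> carrier ?G" by (auto simp: U2_def)
    have "1\<^sub>m 2 \<in> U2" unfolding U2_def B2_iff by simp
    thus "U2 \<noteq> {}" by blast
  next
    fix a assume a: "a \<in> U2"
    hence aB: "a \<in> B2_Cz" by (simp add: U2_def)
    obtain k where k: "k * (a$$(0,0) * a$$(1,1)) = 1"
      "inv\<^bsub>GL2_Cz\<^esub> a = mat2 (k*a$$(1,1)) (-(k*a$$(0,1))) 0 (k*a$$(0,0))"
      using B2_inv_eq[OF aB] by blast
    have "k = 1" using k(1) a by (simp add: U2_def)
    moreover have "inv\<^bsub>GL2_Cz\<^esub> a \<in> B2_Cz" using aB subgroup.m_inv_closed[OF subgroup_B2] by blast
    ultimately show "inv\<^bsub>?G\<^esub> a \<in> U2" using k a invc[OF aB] by (simp add: U2_def)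
  next
    fix a b assume ab: "a \<in> U2" "b \<in> U2"
    hence abB: "a \<in> B2_Cz" "b \<in> B2_Cz" by (auto simp: U2_def)
    hence "a \<otimes>\<^bsub>?G\<^esub> b \<in> B2_Cz" using G1.m_closed[of a b] by simp
    moreover have "(a * b) = mat2 (a$$(0,0)) (a$$(0,1)) 0 (a$$(1,1)) * mat2 (b$$(0,0)) (b$$(0,1)) 0 (b$$(1,1))"
      using arg_cong2[where f=times, OF B2_eta[OF abB(1)] B2_eta[OF abB(2)]] .
    ultimately show "a \<otimes>\<^bsub>?G\<^esub> b \<in> U2" using ab by (simp add: U2_def)
  qed
  have d1: "derived ?G (carrier ?G) \<subseteq> U2"
    unfolding derived_def
  proof (rule G1.generate_subgroup_incl[OF _ U2sub], safe)
    fix x y assume xy: "x \<in> carrier ?G" "y \<in> carrier ?G"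
    hence xyB: "x \<in> B2_Cz" "y \<in> B2_Cz" by auto
    obtain k where k: "k * (x$$(0,0) * x$$(1,1)) = 1"
      "inv\<^bsub>GL2_Cz\<^esub> x = mat2 (k*x$$(1,1)) (-(k*x$$(0,1))) 0 (k*x$$(0,0))"
      using B2_inv_eq[OF xyB(1)] by blast
    obtain k' where k': "k' * (y$$(0,0) * y$$(1,1)) = 1"
      "inv\<^bsub>GL2_Cz\<^esub> y = mat2 (k'*y$$(1,1)) (-(k'*y$$(0,1))) 0 (k'*y$$(0,0))"
      using B2_inv_eq[OF xyB(2)] by blast
    have inB: "x \<otimes>\<^bsub>?G\<^esub> y \<otimes>\<^bsub>?G\<^esub> inv\<^bsub>?G\<^esub> x \<otimes>\<^bsub>?G\<^esub> inv\<^bsub>?G\<^esub> y \<in> B2_Cz"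
      using xy G1.inv_closed G1.m_closed by simp
    have eq: "x * y * inv\<^bsub>?G\<^esub> x * inv\<^bsub>?G\<^esub> y =
       mat2 (x$$(0,0)) (x$$(0,1)) 0 (x$$(1,1)) * mat2 (y$$(0,0)) (y$$(0,1)) 0 (y$$(1,1)) *
       mat2 (k*x$$(1,1)) (-(k*x$$(0,1))) 0 (k*x$$(0,0)) * mat2 (k'*y$$(1,1)) (-(k'*y$$(0,1))) 0 (k'*y$$(0,0))"
      using invc[OF xyB(1)] invc[OF xyB(2)] k(2) k'(2) 
        arg_cong2[where f=times, OF B2_eta[OF xyB(1)] B2_eta[OF xyB(2)]] by simp
    have "(x * y * inv\<^bsub>?G\<^esub> x * inv\<^bsub>?G\<^esub> y)$$(0,0) = 1 \<and> (x * y * inv\<^bsub>?G\<^esub> x * inv\<^bsub>?G\<^esub> y)$$(1,1) = 1"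
      by (rule comm_diag[OF k(1) k'(1) eq])
    thus "x \<otimes>\<^bsub>?G\<^esub> y \<otimes>\<^bsub>?G\<^esub> inv\<^bsub>?G\<^esub> x \<otimes>\<^bsub>?G\<^esub> inv\<^bsub>?G\<^esub> y \<in> U2"
      unfolding U2_def using inB by simp
  qed
  have d2: "derived ?G U2 \<subseteq> {\<one>\<^bsub>?G\<^esub>}"
    unfolding derived_def
  proof (rule G1.generate_subgroup_incl[OF _ G1.triv_subgroup], safe)
    fix x y assume xy: "x \<in> U2" "y \<in> U2"
    hence xyc: "x \<in> carrier ?G" "y \<in> carrier ?G" using U2sub subgroup.subset by blast+
    have "x * y = y * x"
    proof -
      have "x * y = mat2 1 (x$$(0,1)) 0 1 * mat2 1 (y$$(0,1)) 0 1"
        using arg_cong2[where f=times, OF U2_eta[OF xy(1)] U2_eta[OF xy(2)]] .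
      moreover have "y * x = mat2 1 (y$$(0,1)) 0 1 * mat2 1 (x$$(0,1)) 0 1"
        using arg_cong2[where f=times, OF U2_eta[OF xy(2)] U2_eta[OF xy(1)]] .
      ultimately show ?thesis by (simp add: add.commute)
    qed
    hence "x \<otimes>\<^bsub>?G\<^esub> y = y \<otimes>\<^bsub>?G\<^esub> x" by simp
    hence c: "x \<otimes>\<^bsub>?G\<^esub> y = y \<otimes>\<^bsub>?G\<^esub> x" .
    have ic: "inv\<^bsub>?G\<^esub> x \<in> carrier ?G" "inv\<^bsub>?G\<^esub> y \<in> carrier ?G"
      using xyc G1.inv_closed by blast+
    have "x \<otimes>\<^bsub>?G\<^esub> y \<otimes>\<^bsub>?G\<^esub> inv\<^bsub>?G\<^esub> x \<otimes>\<^bsub>?G\<^esub> inv\<^bsub>?G\<^esub> y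
       = y \<otimes>\<^bsub>?G\<^esub> (x \<otimes>\<^bsub>?G\<^esub> inv\<^bsub>?G\<^esub> x) \<otimes>\<^bsub>?G\<^esub> inv\<^bsub>?G\<^esub> y"
      unfolding c using xyc ic by (simp only: G1.m_assoc G1.m_closed)
    also have "\<dots> = \<one>\<^bsub>?G\<^esub>"
      using xyc ic by (simp only: G1.r_inv G1.r_one)
    finally show "x \<otimes>\<^bsub>?G\<^esub> y \<otimes>\<^bsub>?G\<^esub> inv\<^bsub>?G\<^esub> x \<otimes>\<^bsub>?G\<^esub> inv\<^bsub>?G\<^esub> y = \<one>\<^bsub>?G\<^esub>" .
  qed
  have "(derived ?G ^^ 2) (carrier ?G) \<subseteq> {\<one>\<^bsub>?G\<^esub>}"
    using G1.mono_derived[OF d1] d2 by (simp add: numeral_2_eq_2)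
  moreover have "\<one>\<^bsub>?G\<^esub> \<in> (derived ?G ^^ 2) (carrier ?G)"
    using subgroup.one_closed[OF G1.exp_of_derived_is_subgroup[OF G1.subgroup_self]] by blast
  ultimately show ?thesis using G1.solvable_iff_trivial_derived_seq by blast
qed


definition ev :: "complex \<Rightarrow> complex poly mat \<Rightarrow> complex mat" where
  "ev z A = mat2 (poly (A$$(0,0)) z) (poly (A$$(0,1)) z) (poly (A$$(1,0)) z) (poly (A$$(1,1)) z)"

lemma ev_mat2[simp]: "ev z (mat2 a b c d) = mat2 (poly a z) (poly b z) (poly c z) (poly d z)"
  by (simp add: ev_def)

lemma ev_carrier[simp]: "ev z A \<in> carrier_mat 2 2" by (simp add: ev_def)

lemma ev_mult: assumes "A \<in> carrier_mat 2 2" "B \<in> carrier_mat 2 2"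
  shows "ev z (A * B) = ev z A * ev z B"
  unfolding ev_def mult_eta[OF assms] by simp

lemma ev_one: "ev z (1\<^sub>m 2) = mat2 1 0 0 1"
  by (simp add: one_mat2)

lemma cinv_unique:
  assumes "(X::complex mat) \<in> carrier_mat 2 2" "Y \<in> carrier_mat 2 2" "Z \<in> carrier_mat 2 2"
    "X * Y = 1\<^sub>m 2" "Z * X = 1\<^sub>m 2"
  shows "Y = Z"
proof -
  have "Y = (Z * X) * Y" using assms by simp
  also have "\<dots> = Z * (X * Y)" by (rule assoc_mult_mat[OF assms(3,1,2)])
  also have "\<dots> = Z" using assms by simp
  finally show ?thesis .
qed

lemma d2_prod: "mat2 (2::complex) 0 0 (1/2) = mat2 1 2 0 1 * mat2 1 0 (-1/2) 1 * mat2 1 2 0 1 * mat2 1 (-1) 0 1 * mat2 1 0 1 1 * mat2 1 (-1) 0 1"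
  by simp

lemma u_comm: "mat2 (2::complex) 0 0 (1/2) * mat2 1 (t/3) 0 1 * mat2 (1/2) 0 0 2 * mat2 1 (-(t/3)) 0 1 = mat2 1 t 0 1"
  by simp

lemma l_comm: "mat2 (2::complex) 0 0 (1/2) * mat2 1 0 (-(4*t/3)) 1 * mat2 (1/2) 0 0 2 * mat2 1 0 (4*t/3) 1 = mat2 1 0 t 1"
  by simp


lemma base_calc: "(c0::complex) \<noteq> 0 \<Longrightarrow>
  mat2 1 (-a0/c0) 0 1 * mat2 a0 b0 c0 d0 * mat2 1 (-d0/c0) 0 1 = mat2 0 (b0 - a0*d0/c0) c0 0"
  by (simp add: field_simps)

lemma base_calc2: "(c0::complex) \<noteq> 0 \<Longrightarrow> \<beta> \<noteq> 0 \<Longrightarrow>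
  mat2 0 \<beta> c0 0 * mat2 1 (t*\<beta>/c0) 0 1 * mat2 0 (1/c0) (1/\<beta>) 0 = mat2 1 0 t 1"
  by (simp add: field_simps)

lemma Uc_B2: "mat2 1 [:s:] 0 1 \<in> B2_Cz"
  unfolding B2_iff by simp

lemma not_solvable:
  assumes H: "subgroup H GL2_Cz" "B2_Cz \<subset> H"
  shows "\<not> solvable (GL2_Cz\<lparr>carrier := H\<rparr>)"
proof
  assume sol: "solvable (GL2_Cz\<lparr>carrier := H\<rparr>)"
  let ?G = "GL2_Cz\<lparr>carrier := H\<rparr>"
  interpret G2: group ?G by (rule GL.subgroup_imp_group[OF H(1)])
  obtain n where n: "(derived ?G ^^ n) H = {1\<^sub>m 2}"
    using sol G2.solvable_iff_trivial_derived_seq by auto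
  obtain g where g: "g \<in> H" "g \<notin> B2_Cz" using H(2) by blast
  have HGL: "H \<subseteq> carrier GL2_Cz" using H(1) subgroup.subset by blast
  have gc: "g \<in> carrier GL2_Cz" using HGL g by blast
  hence "g$$(1,0) \<noteq> 0" using g B2_iff by blast
  then obtain z where z: "poly (g$$(1,0)) z \<noteq> 0" using poly_all_0_iff_0 by blast
  define D where "D k = (derived ?G ^^ k) H" for k
  have Dsub: "subgroup (D k) ?G" for k
    using G2.exp_of_derived_is_subgroup[OF G2.subgroup_self, of k] by (simp add: D_def)
  have DH: "D k \<subseteq> H" for k using subgroup.subset[OF Dsub[of k]] by simp
  have Dc: "x \<in> carrier_mat 2 2" if "x \<in> D k" for x k using that DH HGL by auto
  have Dmult: "x * y \<in> D k" if "x \<in> D k" "y \<in> D k" for x y k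
    using subgroup.m_closed[OF Dsub[of k] that] by simp
  have Dinv: "inv\<^bsub>?G\<^esub> x \<in> D k \<and> ev z x * ev z (inv\<^bsub>?G\<^esub> x) = mat2 1 0 0 1" if "x \<in> D k" for x k
  proof
    show i: "inv\<^bsub>?G\<^esub> x \<in> D k" using subgroup.m_inv_closed[OF Dsub[of k] that] .
    have xc: "x \<in> carrier ?G" using that DH by auto
    have "x \<otimes>\<^bsub>?G\<^esub> inv\<^bsub>?G\<^esub> x = \<one>\<^bsub>?G\<^esub>" using G2.r_inv[OF xc] .
    hence "x * inv\<^bsub>?G\<^esub> x = 1\<^sub>m 2" by simp
    hence "ev z (x * inv\<^bsub>?G\<^esub> x) = mat2 1 0 0 1" using ev_one by simp
    thus "ev z x * ev z (inv\<^bsub>?G\<^esub> x) = mat2 1 0 0 1"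
      using ev_mult[OF Dc[OF that] Dc[OF i]] by simp
  qed
  have Dcomm: "x * y * inv\<^bsub>?G\<^esub> x * inv\<^bsub>?G\<^esub> y \<in> D (Suc k)" if "x \<in> D k" "y \<in> D k" for x y k
  proof -
    have "x \<otimes>\<^bsub>?G\<^esub> y \<otimes>\<^bsub>?G\<^esub> inv\<^bsub>?G\<^esub> x \<otimes>\<^bsub>?G\<^esub> inv\<^bsub>?G\<^esub> y \<in> derived_set ?G (D k)"
      by (rule UN_I[OF that(1)], rule UN_I[OF that(2)], simp)
    hence "x \<otimes>\<^bsub>?G\<^esub> y \<otimes>\<^bsub>?G\<^esub> inv\<^bsub>?G\<^esub> x \<otimes>\<^bsub>?G\<^esub> inv\<^bsub>?G\<^esub> y \<in> derived ?G (D k)"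
      unfolding derived_def by (rule generate.incl)
    thus ?thesis by (simp add: D_def)
  qed
  define P where "P k = ev z ` D k" for k
  have Pmult: "X * Y \<in> P k" if XY: "X \<in> P k" "Y \<in> P k" for X Y k
  proof -
    obtain x y where "x \<in> D k" "y \<in> D k" "X = ev z x" "Y = ev z y" using XY P_def by auto
    thus ?thesis using Dmult[of x k y] ev_mult[OF Dc Dc] unfolding P_def by (metis image_eqI)
  qed
  have key: "mat2 1 t 0 1 \<in> P k \<and> mat2 1 0 t 1 \<in> P k" for t k
  proof (induction k arbitrary: t)
    case 0
    have D0: "D 0 = H" by (simp add: D_def)
    have UcH: "mat2 1 [:s:] 0 1 \<in> H" for s using Uc_B2 H(2) by blast
    have ev_Uc: "ev z (mat2 1 [:s:] 0 1) = mat2 1 s 0 1" for s by simp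
    have Hm: "a * b \<in> H" if "a \<in> H" "b \<in> H" for a b
      using subgroup.m_closed[OF H(1) that] by simp
    have Hc: "a \<in> carrier_mat 2 2" if "a \<in> H" for a using that HGL by auto
    define a0 b0 c0 d0 where "a0 = poly (g$$(0,0)) z" "b0 = poly (g$$(0,1)) z"
      "c0 = poly (g$$(1,0)) z" "d0 = poly (g$$(1,1)) z"
    have evg: "ev z g = mat2 a0 b0 c0 d0" unfolding ev_def a0_b0_c0_d0_def ..
    have c0: "c0 \<noteq> 0" using z a0_b0_c0_d0_def by simp
    obtain k where k: "det g * k = 1" using unit_inv_ex gc by auto
    have "det g = det (mat2 (g$$(0,0)) (g$$(0,1)) (g$$(1,0)) (g$$(1,1)))"
      using mat2_eta[of g] gc by (intro arg_cong[where f=det]) auto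
    hence "poly (det g) z = a0*d0 - b0*c0" unfolding a0_b0_c0_d0_def by simp
    hence "(a0*d0 - b0*c0) * poly k z = 1" using arg_cong[OF k, of "\<lambda>p. poly p z"] by simp
    hence dt: "a0*d0 - b0*c0 \<noteq> 0" by auto
    define \<beta> where "\<beta> = b0 - a0*d0/c0"
    have b: "\<beta> \<noteq> 0"
    proof
      assume "\<beta> = 0"
      hence "\<beta> * c0 = 0" by simp
      hence "a0*d0 - b0*c0 = 0" using c0 unfolding \<beta>_def by (simp add: field_simps)
      thus False using dt by simp
    qed
    define X where "X = mat2 1 [:-a0/c0:] 0 1 * g * mat2 1 [:-d0/c0:] 0 1"
    have XH: "X \<in> H" unfolding X_def using Hm UcH g(1) by blast
    have gH: "g \<in> carrier_mat 2 2" using Hc[OF g(1)] .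
    have "ev z X = ev z (mat2 1 [:-a0/c0:] 0 1 * g) * ev z (mat2 1 [:-d0/c0:] 0 1)"
      unfolding X_def by (rule ev_mult) (use gH mult_carrier_mat[OF mat2_carrier gH] in auto)
    also have "\<dots> = ev z (mat2 1 [:-a0/c0:] 0 1) * ev z g * ev z (mat2 1 [:-d0/c0:] 0 1)"
      by (subst ev_mult) (use gH in auto)
    also have "\<dots> = mat2 1 (-a0/c0) 0 1 * mat2 a0 b0 c0 d0 * mat2 1 (-d0/c0) 0 1"
      unfolding evg ev_Uc ..
    also have "\<dots> = mat2 0 \<beta> c0 0" unfolding \<beta>_def by (rule base_calc[OF c0])
    finally have evX: "ev z X = mat2 0 \<beta> c0 0" .
    have XG: "X \<in> carrier GL2_Cz" using XH HGL by auto
    define iX where "iX = inv\<^bsub>GL2_Cz\<^esub> X"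
    have iXH: "iX \<in> H" unfolding iX_def using subgroup.m_inv_closed[OF H(1) XH] .
    have "X \<otimes>\<^bsub>GL2_Cz\<^esub> iX = \<one>\<^bsub>GL2_Cz\<^esub>" unfolding iX_def using GL.r_inv[OF XG] .
    hence "X * iX = 1\<^sub>m 2" by simp
    hence "ev z (X * iX) = mat2 1 0 0 1" using ev_one by simp
    hence "ev z X * ev z iX = mat2 1 0 0 1" using ev_mult[OF Hc[OF XH] Hc[OF iXH]] by simp
    hence e1: "ev z X * ev z iX = 1\<^sub>m 2" by (simp add: one_mat2)
    have e2: "mat2 0 (1/c0) (1/\<beta>) 0 * ev z X = 1\<^sub>m 2" unfolding evX one_mat2 using c0 b by simp
    have evi: "ev z iX = mat2 0 (1/c0) (1/\<beta>) 0"
      by (rule cinv_unique[OF ev_carrier ev_carrier mat2_carrier e1 e2])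
    define Y where "Y = X * mat2 1 [:t*\<beta>/c0:] 0 1 * iX"
    have YH: "Y \<in> H" unfolding Y_def using Hm XH UcH iXH by blast
    have XHc: "X \<in> carrier_mat 2 2" using Hc[OF XH] .
    have "ev z Y = ev z (X * mat2 1 [:t*\<beta>/c0:] 0 1) * ev z iX"
      unfolding Y_def by (rule ev_mult) (use Hc[OF iXH] mult_carrier_mat[OF XHc mat2_carrier] in auto)
    also have "\<dots> = ev z X * ev z (mat2 1 [:t*\<beta>/c0:] 0 1) * ev z iX"
      by (subst ev_mult) (use XHc in auto)
    also have "\<dots> = mat2 0 \<beta> c0 0 * mat2 1 (t*\<beta>/c0) 0 1 * mat2 0 (1/c0) (1/\<beta>) 0"
      unfolding evX evi ev_Uc ..
    also have "\<dots> = mat2 1 0 t 1" by (rule base_calc2[OF c0 b])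
    finally have "ev z Y = mat2 1 0 t 1" .
    hence "mat2 1 0 t 1 \<in> P 0" unfolding P_def D0 using YH by (metis image_eqI)
    moreover have "mat2 1 t 0 1 \<in> P 0" unfolding P_def D0 using UcH[of t] ev_Uc[of t] by (metis image_eqI)
    ultimately show ?case by blast
  next
    case (Suc k)
    have d2: "mat2 (2::complex) 0 0 (1/2) \<in> P k"
      unfolding d2_prod using Suc.IH by (intro Pmult) auto
    then obtain x where x: "x \<in> D k" "ev z x = mat2 2 0 0 (1/2)" unfolding P_def by auto
    have ix: "ev z (inv\<^bsub>?G\<^esub> x) = mat2 (1/2) 0 0 2"
      by (rule cinv_unique[of "ev z x"]) (use x Dinv[OF x(1)] in \<open>simp_all add: one_mat2\<close>)
    obtain y where y: "y \<in> D k" "ev z y = mat2 1 (t/3) 0 1" using Suc.IH[of "t/3"] unfolding P_def by auto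
    have iy: "ev z (inv\<^bsub>?G\<^esub> y) = mat2 1 (-(t/3)) 0 1"
      by (rule cinv_unique[of "ev z y"]) (use y Dinv[OF y(1)] in \<open>simp_all add: one_mat2\<close>)
    obtain y' where y': "y' \<in> D k" "ev z y' = mat2 1 0 (-(4*t/3)) 1" using Suc.IH[of "-(4*t/3)"] unfolding P_def by auto
    have iy': "ev z (inv\<^bsub>?G\<^esub> y') = mat2 1 0 (4*t/3) 1"
      by (rule cinv_unique[of "ev z y'"]) (use y' Dinv[OF y'(1)] in \<open>simp_all add: one_mat2\<close>)
    have ev4: "ev z (a * b * c * d) = ev z a * ev z b * ev z c * ev z d"
      if "a \<in> D k" "b \<in> D k" "c \<in> D k" "d \<in> D k" for a b c d
      using that Dc Dmult ev_mult by metis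
    have "ev z (x * y * inv\<^bsub>?G\<^esub> x * inv\<^bsub>?G\<^esub> y) = mat2 1 t 0 1"
      using ev4[OF x(1) y(1) conjunct1[OF Dinv[OF x(1)]] conjunct1[OF Dinv[OF y(1)]]] x y ix iy u_comm by simp
    moreover have "ev z (x * y' * inv\<^bsub>?G\<^esub> x * inv\<^bsub>?G\<^esub> y') = mat2 1 0 t 1"
      using ev4[OF x(1) y'(1) conjunct1[OF Dinv[OF x(1)]] conjunct1[OF Dinv[OF y'(1)]]] x y' ix iy' l_comm by simp
    ultimately show ?case unfolding P_def using Dcomm[OF x(1) y(1)] Dcomm[OF x(1) y'(1)] by (metis image_eqI)
  qed
  have "P n = {mat2 1 0 0 1}" unfolding P_def D_def n using ev_one by simp
  thus False using key[of 1 n] by simp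
qed

theorem lemma3p23:
  shows "subgroup B2_Cz GL2_Cz \<and> solvable (GL2_Cz\<lparr>carrier := B2_Cz\<rparr>) \<and>
         (\<forall>H. subgroup H GL2_Cz \<and> B2_Cz \<subset> H \<longrightarrow> \<not> solvable (GL2_Cz\<lparr>carrier := H\<rparr>))"
  using subgroup_B2 solvable_B2 not_solvable by blast

end
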